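(* Let $(X_i)$ be iid with $\mathbb E[X_1]=0$, $\operatorname{Var}(X_1)=1$, $S_n=X_1+\dots+X_n$, and suppose there is $\gamma_n\to\infty$ with $\sup_{0\le x<\gamma_n}|\mathbb P(S_n/\sqrt n>x)/\overline\Phi(x)-1|\to0$. Let $k=k_n\to\infty$, $p=p_n\to\infty$ be integers with $p_n/k_n\to\infty$ and $p/k<\exp(\gamma_n^2/2)$. Let $m=[p/k]$ and $$N_p=\frac1k\sum_{i=1}^p\varepsilon_{d_m(S_{ni}/\sqrt n-d_m)}.$$ Then for every $x\in\mathbb R$, $\mathbb E[N_p(x,\infty)]\to e^{-x}$ and $\operatorname{Var}(N_p(x,\infty))\to0$; consequently $N_p(x,\infty)\xrightarrow{\mathbb P}e^{-x}$ for every $x\in\mathbb R$.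
   Context: $\overline\Phi=1-\Phi$ with $\Phi$ the standard normal distribution function. For $m\ge2$, $d_m=\sqrt{2\log m}-\frac{\log\log m+\log 4\pi}{2(2\log m)^{1/2}}$. For each $n$, $(S_{ni})_{i\ge1}$ are iid copies of $S_n$; $\varepsilon_x$ is Dirac measure at $x$. *)

theory Defs
  imports "HOL-Probability.Probability"
begin

definition Phi :: "real \<Rightarrow> real" where
  "Phi x = (LBINT t:{..x}. std_normal_density t)"

definition Phi_bar :: "real \<Rightarrow> real" where
  "Phi_bar x = 1 - Phi x"

text \<open>Normalising constants d_m (meaningful for m >= 2).\<close>
definition d_const :: "nat \<Rightarrow> real" where
  "d_const m = sqrt (2 * ln (real m))
     - (ln (ln (real m)) + ln (4 * pi)) / (2 * sqrt (2 * ln (real m)))"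

text \<open>N_p(x,infinity) evaluated at omega: (1/k) times the number of i in 1..p
  (indexed here by i < p) with d_m (S_ni / sqrt n - d_m) > x.\<close>
definition N_tail :: "nat \<Rightarrow> nat \<Rightarrow> nat \<Rightarrow> (nat \<Rightarrow> 'b \<Rightarrow> real) \<Rightarrow> real \<Rightarrow> 'b \<Rightarrow> real" where
  "N_tail n k p Y x \<omega> =
     (let m = p div k in
      real (card {i. i < p \<and> d_const m * (Y i \<omega> / sqrt (real n) - d_const m) > x}) / real k)"

end

theory Submission
  imports Defs "HOL-Real_Asymp.Real_Asymp"
begin


lemma snd_setint: "A \<in> sets borel \<Longrightarrow> set_integrable lborel A std_normal_density"
  unfolding set_integrable_def by (intro integrable_mult_indicator) auto

lemma Phi_bar_tail: "Phi_bar t = (LINT s:{t<..}|lborel. std_normal_density s)"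
proof -
  have "(LINT s:UNIV|lborel. std_normal_density s) = 1"
    by (simp add: set_lebesgue_integral_def)
  moreover have "(LINT s:UNIV|lborel. std_normal_density s) =
      (LINT s:{..t}|lborel. std_normal_density s) + (LINT s:{t<..}|lborel. std_normal_density s)"
  proof -
    have "UNIV = {..t} \<union> {t<..}" by auto
    moreover have "{..t} \<inter> {t<..} = {}" by auto
    ultimately show ?thesis
      using set_integral_Un[of "{..t}" "{t<..}" lborel std_normal_density]
      by (simp add: snd_setint)
  qed
  ultimately show ?thesis unfolding Phi_bar_def Phi_def by linarith
qed

lemma exp_sq_lim: "((\<lambda>s::real. exp (- s\<^sup>2 / 2)) \<longlongrightarrow> 0) at_top"
  by real_asymp

lemma Phi_bar_upper:
  assumes t: "t > 0"
  shows "Phi_bar t \<le> std_normal_density t / t"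
proof -
  let ?F = "\<lambda>s. - std_normal_density s / t"
  let ?f = "\<lambda>s. s * std_normal_density s / t"
  have h1: "ereal t < \<infinity>" by simp
  have h2: "DERIV ?F x :> ?f x" if "ereal t < ereal x" "ereal x < \<infinity>" for x
    unfolding std_normal_density_def using t
    by (auto intro!: derivative_eq_intros simp: field_simps)
  have h3: "isCont ?f x" if "ereal t < ereal x" "ereal x < \<infinity>" for x
    unfolding std_normal_density_def using t by (intro continuous_intros) auto
  have h4: "AE x in lborel. ereal t < ereal x \<longrightarrow> ereal x < \<infinity> \<longrightarrow> 0 \<le> ?f x"
    using t by auto
  have "isCont ?F t" unfolding std_normal_density_def using t by (intro continuous_intros) auto
  from tendsto_within_subset[OF this[unfolded isCont_def] subset_UNIV, of "{t<..}"]
  have h5: "((?F \<circ> real_of_ereal) \<longlongrightarrow> ?F t) (at_right (ereal t))"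
    unfolding ereal_tendsto_simps1 by simp
  have eqF: "?F = (\<lambda>s. (- (1 / sqrt (2 * pi)) / t) * exp (- s\<^sup>2 / 2))"
    by (simp add: fun_eq_iff std_normal_density_def)
  have h6: "((?F \<circ> real_of_ereal) \<longlongrightarrow> 0) (at_left \<infinity>)"
    unfolding ereal_tendsto_simps1 eqF
    using tendsto_mult[OF tendsto_const exp_sq_lim, of "- (1 / sqrt (2 * pi)) / t"]
    by simp
  note FT = interval_integral_FTC_nonneg[OF h1 h2 h3 h4 h5 h6]
  have "Phi_bar t = (LINT s:{t<..}|lborel. std_normal_density s)" by (rule Phi_bar_tail)
  also have "\<dots> \<le> (LINT s:{t<..}|lborel. ?f s)"
  proof (intro set_integral_mono snd_setint)
    show "set_integrable lborel {t<..} ?f" using FT(1) by simp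
    fix s assume s: "s \<in> {t<..}"
    have "1 * std_normal_density s \<le> (s / t) * std_normal_density s"
      by (rule mult_right_mono) (use s t in auto)
    then show "std_normal_density s \<le> ?f s" by simp
  qed simp
  also have "\<dots> = std_normal_density t / t"
    using FT(2) by (simp add: interval_lebesgue_integral_def)
  finally show ?thesis .
qed

lemma deriv_aux: "x \<noteq> 0 \<Longrightarrow> DERIV (\<lambda>s::real. - exp (- s\<^sup>2 / 2) * (1 / s - 1 / s ^ 3)) x :> exp (- x\<^sup>2 / 2) * (1 - 3 / x ^ 4)"
  apply (rule derivative_eq_intros refl | simp)+
  apply (simp add: field_simps eval_nat_numeral)
  done

lemma Phi_bar_lower:
  assumes t: "t \<ge> 2"
  shows "std_normal_density t * (1 / t - 1 / t ^ 3) \<le> Phi_bar t"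
proof -
  define c :: real where "c = 1 / sqrt (2 * pi)"
  have c: "c > 0" unfolding c_def by simp
  have snd: "std_normal_density s = c * exp (- s\<^sup>2 / 2)" for s
    unfolding std_normal_density_def c_def ..
  let ?F = "\<lambda>s. c * (- exp (- s\<^sup>2 / 2) * (1 / s - 1 / s ^ 3))"
  let ?f = "\<lambda>s. c * (exp (- s\<^sup>2 / 2) * (1 - 3 / s ^ 4))"
  have h1: "ereal t < \<infinity>" by simp
  have h2: "DERIV ?F x :> ?f x" if "ereal t < ereal x" "ereal x < \<infinity>" for x
  proof -
    have "x \<noteq> 0" using that t by auto
    then have "DERIV (\<lambda>s::real. - exp (- s\<^sup>2 / 2) * (1 / s - 1 / s ^ 3)) x :> exp (- x\<^sup>2 / 2) * (1 - 3 / x ^ 4)"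
      by (rule deriv_aux)
    from DERIV_cmult[OF this, of c] show ?thesis .
  qed
  have h3: "isCont ?f x" if "ereal t < ereal x" "ereal x < \<infinity>" for x
  proof -
    have "x \<noteq> 0" using that t by auto
    then show ?thesis by (intro continuous_intros) auto
  qed
  have h4: "AE x in lborel. ereal t < ereal x \<longrightarrow> ereal x < \<infinity> \<longrightarrow> 0 \<le> ?f x"
  proof (intro AE_I2 impI)
    fix x assume "ereal t < ereal x"
    then have x: "x \<ge> 2" using t by auto
    have "(2::real)^4 \<le> x^4" by (rule power_mono) (use x in auto)
    then have "3 / x ^ 4 \<le> 1" by (simp add: divide_le_eq)
    then show "0 \<le> ?f x" using c by simp
  qed
  have t0: "t \<noteq> 0" using t by auto
  have "isCont ?F t" using t0 by (intro continuous_intros) auto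
  from tendsto_within_subset[OF this[unfolded isCont_def] subset_UNIV, of "{t<..}"]
  have h5: "((?F \<circ> real_of_ereal) \<longlongrightarrow> ?F t) (at_right (ereal t))"
    unfolding ereal_tendsto_simps1 by simp
  have "((\<lambda>s::real. - exp (- s\<^sup>2 / 2) * (1 / s - 1 / s ^ 3)) \<longlongrightarrow> 0) at_top"
    by real_asymp
  from tendsto_mult[OF tendsto_const this, of c]
  have h6: "((?F \<circ> real_of_ereal) \<longlongrightarrow> 0) (at_left \<infinity>)"
    unfolding ereal_tendsto_simps1 by simp
  note FT = interval_integral_FTC_nonneg[OF h1 h2 h3 h4 h5 h6]
  have "std_normal_density t * (1 / t - 1 / t ^ 3) = (LINT s:{t<..}|lborel. ?f s)"
    using FT(2) by (simp add: interval_lebesgue_integral_def snd) metis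
  also have "\<dots> \<le> (LINT s:{t<..}|lborel. std_normal_density s)"
  proof (intro set_integral_mono snd_setint)
    show "set_integrable lborel {t<..} ?f" using FT(1) by simp
    fix s assume "s \<in> {t<..}"
    have "0 \<le> 3 / s ^ 4" by simp
    then have "exp (- s\<^sup>2 / 2) * (1 - 3 / s ^ 4) \<le> exp (- s\<^sup>2 / 2)"
      by (simp add: mult_le_cancel_left1)
    then show "?f s \<le> std_normal_density s" unfolding snd using c by simp
  qed simp
  also have "\<dots> = Phi_bar t" by (rule Phi_bar_tail[symmetric])
  finally show ?thesis .
qed


definition dR :: "real \<Rightarrow> real" where
  "dR r = sqrt (2 * ln r) - (ln (ln r) + ln (4 * pi)) / (2 * sqrt (2 * ln r))"

lemma d_const_dR: "d_const m = dR (real m)"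
  by (simp add: d_const_def dR_def)

lemma dR_lim: "filterlim dR at_top at_top"
  unfolding dR_def by real_asymp

lemma B1: "((\<lambda>r. sqrt (2 * ln r) / dR r) \<longlongrightarrow> 1) at_top"
  unfolding dR_def by real_asymp

lemma B2: "((\<lambda>r::real. (ln (ln r) + ln (4 * pi))\<^sup>2 / ln r) \<longlongrightarrow> 0) at_top"
  by real_asymp

lemma A3: "((\<lambda>r. (1 / dR r) / ((ln (ln r) + ln (4 * pi)) / (2 * sqrt (2 * ln r)))) \<longlongrightarrow> 0) at_top"
  unfolding dR_def by real_asymp

lemma c_pos_ev: "eventually (\<lambda>r::real. 0 < ln (ln r) + ln (4 * pi)) at_top"
  by real_asymp

lemma key_identity:
  fixes r x :: real
  assumes r: "r > 1" and d: "dR r > 0"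
  defines "L \<equiv> ln r" and "c \<equiv> ln (ln r) + ln (4 * pi)"
  defines "u \<equiv> dR r + x / dR r"
  shows "r * std_normal_density u / u =
     (sqrt (2 * L) / dR r) * (dR r / u) * exp (- (c\<^sup>2 / (16 * L))) * exp (- x) * exp (- (x\<^sup>2 / (2 * (dR r)\<^sup>2)))"
proof -
  define s where "s = sqrt (2 * L)"
  define d where "d = dR r"
  have L: "L > 0" unfolding L_def using r by simp
  have s: "s > 0" "s\<^sup>2 = 2 * L" unfolding s_def using L by auto
  have dd: "d = s - c / (2 * s)" unfolding d_def dR_def s_def c_def L_def ..
  have d0: "d > 0" using d unfolding d_def .
  have hd2: "d\<^sup>2 = 2 * L - c + c\<^sup>2 / (8 * L)"
  proof -
    have "d\<^sup>2 = s\<^sup>2 - c + c\<^sup>2 / (4 * s\<^sup>2)"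
      unfolding dd using s(1) by (simp add: power2_eq_square field_simps)
    then show ?thesis using s(2) by simp
  qed
  have hu2: "u\<^sup>2 = d\<^sup>2 + 2 * x + x\<^sup>2 / d\<^sup>2"
    unfolding u_def d_def[symmetric] using d0 by (simp add: power2_eq_square field_simps)
  have e0: "- (u\<^sup>2) / 2 = - (d\<^sup>2) / 2 + - x + - (x\<^sup>2 / (2 * d\<^sup>2))"
    unfolding hu2 using d0 by (simp add: field_simps)
  have e0': "- (d\<^sup>2) / 2 = - L + c / 2 + - (c\<^sup>2 / (16 * L))"
    unfolding hd2 using L by (simp add: field_simps)
  have e1: "- (u\<^sup>2) / 2 = - L + c / 2 + - (c\<^sup>2 / (16 * L)) + - x + - (x\<^sup>2 / (2 * d\<^sup>2))"
    using e0 e0' by linarith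
  have eL: "exp (- L) = 1 / r" unfolding L_def using r by (simp add: exp_minus inverse_eq_divide)
  have ec: "exp c = 4 * pi * L" unfolding c_def L_def using L[unfolded L_def] by (simp add: exp_add)
  have ec2: "exp (c / 2) = sqrt (4 * pi * L)"
  proof -
    have "exp (c / 2) * exp (c / 2) = exp c" by (subst exp_add[symmetric]) simp
    then show ?thesis unfolding ec[symmetric] by (intro real_sqrt_unique[symmetric]) (simp_all add: power2_eq_square)
  qed
  have sq: "sqrt (4 * pi * L) = sqrt (2 * pi) * s"
    unfolding s_def by (simp add: real_sqrt_mult[symmetric])
  have "exp (- (u\<^sup>2) / 2) = exp (- L) * exp (c / 2) * exp (- (c\<^sup>2 / (16 * L))) * exp (- x) * exp (- (x\<^sup>2 / (2 * d\<^sup>2)))"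
    unfolding e1 by (simp only: exp_add)
  also have "\<dots> = (1 / r) * (sqrt (2 * pi) * s) * exp (- (c\<^sup>2 / (16 * L))) * exp (- x) * exp (- (x\<^sup>2 / (2 * d\<^sup>2)))"
    unfolding eL ec2 sq ..
  finally have E: "exp (- (u\<^sup>2) / 2) = (1 / r) * (sqrt (2 * pi) * s) * exp (- (c\<^sup>2 / (16 * L))) * exp (- x) * exp (- (x\<^sup>2 / (2 * d\<^sup>2)))" .
  have "std_normal_density u = exp (- (u\<^sup>2) / 2) / sqrt (2 * pi)"
    by (simp add: std_normal_density_def)
  then show ?thesis unfolding d_def[symmetric] s_def[symmetric] E using r d0
    by (simp add: field_simps)
qed

lemma key_lim:
  fixes x :: real
  shows "((\<lambda>r. r * Phi_bar (dR r + x / dR r)) \<longlongrightarrow> exp (- x)) at_top"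
proof -
  have inv0: "((\<lambda>r. inverse (dR r)) \<longlongrightarrow> 0) at_top"
    by (rule tendsto_inverse_0_at_top[OF dR_lim])
  have dpos: "eventually (\<lambda>r. dR r > 0) at_top"
    using dR_lim by (simp add: filterlim_at_top_dense)
  have ulim: "filterlim (\<lambda>r. dR r + x / dR r) at_top at_top"
  proof -
    have "((\<lambda>r. x / dR r) \<longlongrightarrow> 0) at_top"
      using tendsto_mult[OF tendsto_const inv0, of x] by (simp add: divide_inverse)
    from filterlim_tendsto_add_at_top[OF this dR_lim] show ?thesis by (simp add: add.commute)
  qed
  define G where "G r = (sqrt (2 * ln r) / dR r) * (1 / (1 + x * (inverse (dR r))\<^sup>2))
      * exp (- (((ln (ln r) + ln (4 * pi))\<^sup>2 / ln r) / 16)) * exp (- x)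
      * exp (- (x\<^sup>2 / 2 * (inverse (dR r))\<^sup>2))" for r
  have GL: "(G \<longlongrightarrow> 1 * (1 / (1 + x * 0\<^sup>2)) * exp (- (0 / 16)) * exp (- x) * exp (- (x\<^sup>2 / 2 * 0\<^sup>2))) at_top"
    unfolding G_def by (intro tendsto_intros B1 B2 inv0) simp_all
  define g2 where "g2 r = r * std_normal_density (dR r + x / dR r) / (dR r + x / dR r)" for r
  have "eventually (\<lambda>r. g2 r = G r) at_top"
    using dpos eventually_gt_at_top[of 1]
  proof eventually_elim
    case (elim r)
    have d0: "dR r \<noteq> 0" using elim by simp
    have a: "dR r / (dR r + x / dR r) = 1 / (1 + x * (inverse (dR r))\<^sup>2)"
      using d0 by (simp add: field_simps power2_eq_square)
    have b: "(ln (ln r) + ln (4 * pi))\<^sup>2 / (16 * ln r) = ((ln (ln r) + ln (4 * pi))\<^sup>2 / ln r) / 16"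
      by simp
    have c: "x\<^sup>2 / (2 * (dR r)\<^sup>2) = x\<^sup>2 / 2 * (inverse (dR r))\<^sup>2"
      by (simp add: field_simps power2_eq_square)
    show ?case unfolding g2_def G_def key_identity[OF elim(2) elim(1)] a b c ..
  qed
  then have g2L: "(g2 \<longlongrightarrow> exp (- x)) at_top"
    using GL by (simp add: tendsto_cong)
  define g1 where "g1 r = g2 r * (1 - (inverse (dR r + x / dR r))\<^sup>2)" for r
  have g1L: "(g1 \<longlongrightarrow> exp (- x)) at_top"
    using tendsto_mult[OF g2L tendsto_diff[OF tendsto_const tendsto_power[OF tendsto_inverse_0_at_top[OF ulim], of 2]], of 1]
    unfolding g1_def by simp
  show ?thesis
  proof (rule tendsto_sandwich[OF _ _ g1L g2L])
    have ev: "eventually (\<lambda>r. 2 \<le> dR r + x / dR r) at_top"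
      using ulim by (simp add: filterlim_at_top)
    show "eventually (\<lambda>r. g1 r \<le> r * Phi_bar (dR r + x / dR r)) at_top"
      using ev eventually_gt_at_top[of 1]
    proof eventually_elim
      case (elim r)
      define u where "u = dR r + x / dR r"
      have u: "u \<ge> 2" using elim unfolding u_def by simp
      have "g1 r = r * (std_normal_density u * (1 / u - 1 / u ^ 3))"
        unfolding g1_def g2_def u_def[symmetric] using u
        by (simp add: field_simps power2_eq_square power3_eq_cube)
      also have "\<dots> \<le> r * Phi_bar u"
        using Phi_bar_lower[OF u] elim by (intro mult_left_mono) auto
      finally show ?case unfolding u_def .
    qed
    show "eventually (\<lambda>r. r * Phi_bar (dR r + x / dR r) \<le> g2 r) at_top"
      using ev eventually_gt_at_top[of 1]
    proof eventually_elim
      case (elim r)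
      define u where "u = dR r + x / dR r"
      have u: "u > 0" using elim unfolding u_def by simp
      have "r * Phi_bar u \<le> r * (std_normal_density u / u)"
        using Phi_bar_upper[OF u] elim by (intro mult_left_mono) auto
      then show ?case unfolding g2_def u_def by simp
    qed
  qed
qed

lemma ev_props:
  fixes x :: real
  shows "eventually (\<lambda>r. 1 < r \<and> 0 < dR r \<and> 2 \<le> dR r + x / dR r \<and> dR r + x / dR r < sqrt (2 * ln r)) at_top"
proof -
  have inv0: "((\<lambda>r. inverse (dR r)) \<longlongrightarrow> 0) at_top"
    by (rule tendsto_inverse_0_at_top[OF dR_lim])
  have dpos: "eventually (\<lambda>r. dR r > 0) at_top"
    using dR_lim by (simp add: filterlim_at_top_dense)
  have ulim: "filterlim (\<lambda>r. dR r + x / dR r) at_top at_top"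
  proof -
    have "((\<lambda>r. x / dR r) \<longlongrightarrow> 0) at_top"
      using tendsto_mult[OF tendsto_const inv0, of x] by (simp add: divide_inverse)
    from filterlim_tendsto_add_at_top[OF this dR_lim] show ?thesis by (simp add: add.commute)
  qed
  have ev2: "eventually (\<lambda>r. 2 \<le> dR r + x / dR r) at_top"
    using ulim by (simp add: filterlim_at_top)
  have "((\<lambda>r. \<bar>x\<bar> * ((1 / dR r) / ((ln (ln r) + ln (4 * pi)) / (2 * sqrt (2 * ln r))))) \<longlongrightarrow> \<bar>x\<bar> * 0) at_top"
    by (intro tendsto_intros A3)
  then have T: "((\<lambda>r. \<bar>x\<bar> * ((1 / dR r) / ((ln (ln r) + ln (4 * pi)) / (2 * sqrt (2 * ln r))))) \<longlongrightarrow> 0) at_top"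
    by simp
  have ev3: "eventually (\<lambda>r. \<bar>x\<bar> * ((1 / dR r) / ((ln (ln r) + ln (4 * pi)) / (2 * sqrt (2 * ln r)))) < 1) at_top"
    by (rule order_tendstoD(2)[OF T zero_less_one])
  show ?thesis
    using eventually_gt_at_top[of 1] dpos ev2 ev3 c_pos_ev
  proof eventually_elim
    case (elim r)
    define c where "c = ln (ln r) + ln (4 * pi)"
    define s where "s = sqrt (2 * ln r)"
    define d where "d = dR r"
    have s: "s > 0" unfolding s_def using elim by simp
    have c: "c > 0" unfolding c_def using elim by simp
    have d: "d > 0" unfolding d_def using elim by simp
    have dd: "d = s - c / (2 * s)" unfolding d_def dR_def s_def c_def ..
    have q: "c / (2 * s) > 0" using s c by simp
    have "\<bar>x\<bar> * ((1 / d) / (c / (2 * s))) < 1" using elim(4) unfolding c_def s_def d_def .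
    then have "(\<bar>x\<bar> * ((1 / d) / (c / (2 * s)))) * (c / (2 * s)) < 1 * (c / (2 * s))"
      using q by (intro mult_strict_right_mono) auto
    moreover have "(\<bar>x\<bar> * ((1 / d) / (c / (2 * s)))) * (c / (2 * s)) = \<bar>x\<bar> / d"
      using s c by (simp add: field_simps)
    ultimately have "\<bar>x\<bar> / d < c / (2 * s)" by simp
    moreover have "x / d \<le> \<bar>x\<bar> / d" using d by (simp add: divide_right_mono)
    ultimately have "d + x / d < s" unfolding dd by linarith
    then show ?case using elim unfolding d_def s_def by auto
  qed
qed


lemma count_moments:
  fixes N :: "'b measure" and Y :: "nat \<Rightarrow> 'b \<Rightarrow> real" and B :: "real set" and p k :: nat and q :: real
  assumes P: "prob_space N" and ind: "prob_space.indep_vars N (\<lambda>_. borel) Y UNIV"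
    and B: "B \<in> sets borel"
    and q: "\<And>i. measure N (Y i -` B \<inter> space N) = q" and k: "k > 0"
  defines "C \<equiv> (\<lambda>\<omega>. real (card {i. i < p \<and> Y i \<omega> \<in> B}) / real k)"
  shows "prob_space.expectation N C = real p * q / real k"
    and "prob_space.variance N C = real p * q * (1 - q) / (real k)\<^sup>2"
    and "C \<in> borel_measurable N" and "integrable N (\<lambda>\<omega>. (C \<omega>)\<^sup>2)"
proof -
  interpret prob_space N by (rule P)
  define A where "A i = Y i -` B \<inter> space N" for i
  have rv: "Y i \<in> borel_measurable N" for i
    using ind unfolding indep_vars_def by auto
  have Aev: "A i \<in> sets N" for i
    unfolding A_def using rv B by (rule measurable_sets)
  have mA: "measure N (A i) = q" for i using q A_def by simp
  have AA: "measure N (A i \<inter> A j) = q * q" if "i \<noteq> j" for i j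
  proof -
    have "prob (\<Inter>l\<in>{i,j}. Y l -` B \<inter> space N) = (\<Prod>l\<in>{i,j}. prob (Y l -` B \<inter> space N))"
      by (rule indep_varsD[OF ind]) (use B in auto)
    then show ?thesis using that q unfolding A_def by auto
  qed
  define C' where "C' \<omega> = (\<Sum>i<p. indicator (A i) \<omega>) / real k" for \<omega>
  have CC: "C \<omega> = C' \<omega>" if "\<omega> \<in> space N" for \<omega>
  proof -
    have "{i. i < p \<and> Y i \<omega> \<in> B} = {i\<in>{..<p}. \<omega> \<in> A i}"
      using that by (auto simp: A_def)
    then have "real (card {i. i < p \<and> Y i \<omega> \<in> B}) = real (card {i\<in>{..<p}. \<omega> \<in> A i})" by simp
    also have "\<dots> = (\<Sum>i<p. indicator (A i) \<omega>)"
      by (simp add: indicator_def sum.If_cases Int_def)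
    finally have "real (card {i. i < p \<and> Y i \<omega> \<in> B}) = (\<Sum>i<p. indicator (A i) \<omega>)" .
    then show ?thesis by (simp add: C_def C'_def)
  qed
  have fin: "emeasure N (A i) < \<infinity>" for i by (simp add: less_top[symmetric])
  have intA[simp]: "integrable N (indicator (A i) :: 'b \<Rightarrow> real)" for i
    by (rule integrable_real_indicator[OF Aev fin])
  have intAA[simp]: "integrable N (indicator (A i \<inter> A j) :: 'b \<Rightarrow> real)" for i j
    by (rule integrable_real_indicator) (use Aev in \<open>auto simp: less_top[symmetric]\<close>)
  have Asp[simp]: "A i \<inter> space N = A i" for i by (auto simp: A_def)
  have Asp2[simp]: "A i \<inter> A j \<inter> space N = A i \<inter> A j" for i j by (auto simp: A_def)
  have EC': "expectation C' = real p * q / real k"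
    unfolding C'_def using Aev by (simp add: mA)
  have sq: "(C' \<omega>)\<^sup>2 = (\<Sum>i<p. \<Sum>j<p. indicator (A i \<inter> A j) \<omega>) / (real k)\<^sup>2" for \<omega>
    unfolding C'_def by (simp add: power2_eq_square sum_product indicator_inter_arith power_divide)
  have ES: "(\<Sum>j<p. measure N (A i \<inter> A j)) = q + (real p - 1) * (q * q)"
    if "i < p" for i
  proof -
    have "(\<Sum>j<p. measure N (A i \<inter> A j))
       = measure N (A i \<inter> A i) + (\<Sum>j\<in>{..<p} - {i}. measure N (A i \<inter> A j))"
      using that by (subst sum.remove[of _ i]) auto
    also have "\<dots> = q + (\<Sum>j\<in>{..<p} - {i}. q * q)"
      using mA AA by (auto intro!: sum.cong)
    also have "\<dots> = q + (real p - 1) * (q * q)"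
      using that by (simp add: of_nat_diff)
    finally show ?thesis .
  qed
  have ES2: "(\<Sum>i<p. \<Sum>j<p. measure N (A i \<inter> A j)) = real p * (q + (real p - 1) * (q * q))"
    by (simp add: ES)
  have EC'2: "expectation (\<lambda>\<omega>. (C' \<omega>)\<^sup>2) = real p * (q + (real p - 1) * (q * q)) / (real k)\<^sup>2"
    unfolding sq using Aev by (simp add: ES2)
  show "expectation C = real p * q / real k"
    using EC' by (simp add: CC cong: Bochner_Integration.integral_cong)
  have iC': "integrable N C'" unfolding C'_def using Aev by simp
  have iC'2: "integrable N (\<lambda>\<omega>. (C' \<omega>)\<^sup>2)" unfolding sq using Aev by simp
  have "variance C = variance C'"
    using EC' by (simp add: CC \<open>expectation C = real p * q / real k\<close> cong: Bochner_Integration.integral_cong)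
  also have "\<dots> = real p * q * (1 - q) / (real k)\<^sup>2"
  proof -
    have "variance C' = expectation (\<lambda>\<omega>. (C' \<omega>)\<^sup>2) - (expectation C')\<^sup>2"
      by (rule variance_eq[OF iC' iC'2])
    also have "\<dots> = real p * (q + (real p - 1) * (q * q)) / (real k)\<^sup>2 - (real p * q / real k)\<^sup>2"
      by (simp only: EC' EC'2)
    also have "\<dots> = real p * q * (1 - q) / (real k)\<^sup>2"
      using k by (simp add: field_simps power2_eq_square)
    finally show ?thesis .
  qed
  finally show "variance C = real p * q * (1 - q) / (real k)\<^sup>2" .
  have "C' \<in> borel_measurable N" unfolding C'_def using Aev by measurable
  then show "C \<in> borel_measurable N" by (rule measurable_cong[THEN iffD1, rotated]) (simp add: CC)
  show "integrable N (\<lambda>\<omega>. (C \<omega>)\<^sup>2)"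
    using iC'2 Bochner_Integration.integrable_cong[of N N "\<lambda>\<omega>. (C \<omega>)\<^sup>2" "\<lambda>\<omega>. (C' \<omega>)\<^sup>2"] by (simp add: CC)
qed


lemma div_bounds:
  fixes p k :: nat assumes k: "k > 0"
  shows "real p / real k - 1 \<le> real (p div k)" "real (p div k) \<le> real p / real k"
proof -
  have e: "real p = real k * real (p div k) + real (p mod k)"
    by (metis div_mult_mod_eq mult.commute of_nat_add of_nat_mult)
  have m: "real (p mod k) < real k" using k by simp
  have kk: "real k > 0" using k by simp
  show "real p / real k - 1 \<le> real (p div k)"
    using e m kk by (simp add: field_simps)
  show "real (p div k) \<le> real p / real k"
    using e kk by (simp add: field_simps)
qed

lemma per_n:
  fixes N :: "'b measure" and M :: "'a measure" and Y' :: "nat \<Rightarrow> 'b \<Rightarrow> real"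
    and S' :: "'a \<Rightarrow> real" and n k p :: nat and x :: real
  assumes N: "prob_space N" and ind: "prob_space.indep_vars N (\<lambda>_. borel) Y' UNIV"
    and Yd: "\<And>i. distr N borel (Y' i) = distr M borel S'" and Sm: "S' \<in> borel_measurable M"
    and k: "k > 0" and d: "d_const (p div k) > 0"
  defines "u \<equiv> d_const (p div k) + x / d_const (p div k)"
  defines "q \<equiv> measure M {\<omega> \<in> space M. u < S' \<omega> / sqrt (real n)}"
  shows "prob_space.expectation N (N_tail n k p Y' x) = real p * q / real k"
    and "prob_space.variance N (N_tail n k p Y' x) = real p * q * (1 - q) / (real k)\<^sup>2"
    and "N_tail n k p Y' x \<in> borel_measurable N"
    and "integrable N (\<lambda>\<omega>. (N_tail n k p Y' x \<omega>)\<^sup>2)"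
proof -
  define dd where "dd = d_const (p div k)"
  define B where "B = {t. x < dd * (t / sqrt (real n) - dd)}"
  have NT: "N_tail n k p Y' x = (\<lambda>\<omega>. real (card {i. i < p \<and> Y' i \<omega> \<in> B}) / real k)"
    by (simp add: N_tail_def Let_def B_def dd_def fun_eq_iff)
  have Bs: "B \<in> sets borel" unfolding B_def by measurable
  have Ym: "Y' i \<in> borel_measurable N" for i
    using ind unfolding prob_space.indep_vars_def[OF N] by auto
  have hq: "measure N (Y' i -` B \<inter> space N) = q" for i
  proof -
    have "measure N (Y' i -` B \<inter> space N) = measure (distr N borel (Y' i)) B"
      by (rule measure_distr[OF Ym Bs, symmetric])
    also have "\<dots> = measure (distr M borel S') B" by (simp only: Yd)
    also have "\<dots> = measure M (S' -` B \<inter> space M)" by (rule measure_distr[OF Sm Bs])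
    also have "S' -` B \<inter> space M = {\<omega> \<in> space M. u < S' \<omega> / sqrt (real n)}"
    proof -
      have "x < dd * (y - dd) \<longleftrightarrow> u < y" for y
      proof -
        have "x < dd * (y - dd) \<longleftrightarrow> x / dd < y - dd"
          using d unfolding dd_def by (simp add: pos_divide_less_eq mult.commute)
        then show ?thesis unfolding u_def dd_def[symmetric] by linarith
      qed
      then show ?thesis unfolding B_def by auto
    qed
    finally show ?thesis unfolding q_def .
  qed
  note CM = count_moments[OF N ind Bs hq k, of p]
  show "prob_space.expectation N (N_tail n k p Y' x) = real p * q / real k"
    unfolding NT by (rule CM(1))
  show "prob_space.variance N (N_tail n k p Y' x) = real p * q * (1 - q) / (real k)\<^sup>2"
    unfolding NT by (rule CM(2))
  show "N_tail n k p Y' x \<in> borel_measurable N"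
    unfolding NT by (rule CM(3))
  show "integrable N (\<lambda>\<omega>. (N_tail n k p Y' x \<omega>)\<^sup>2)"
    unfolding NT by (rule CM(4))
qed

lemma Phi_bar_pos:
  assumes t: "t \<ge> 2" shows "Phi_bar t > 0"
proof -
  have t0: "t > 0" using t by simp
  have "2 * 2 \<le> t * t" by (rule mult_mono) (use t in auto)
  then have "t * 1 < t * (t * t)" using t0 by (intro mult_strict_left_mono) auto
  then have "1 / t ^ 3 < 1 / t" using t0 by (simp add: power3_eq_cube divide_simps)
  then have "0 < std_normal_density t * (1 / t - 1 / t ^ 3)"
    by (intro mult_pos_pos normal_density_pos) auto
  also have "\<dots> \<le> Phi_bar t" by (rule Phi_bar_lower[OF t])
  finally show ?thesis .
qed

theorem mainTheorem10:
  fixes M :: "'a measure" and X :: "nat \<Rightarrow> 'a \<Rightarrow> real"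
    and Mn :: "nat \<Rightarrow> 'b measure" and Y :: "nat \<Rightarrow> nat \<Rightarrow> 'b \<Rightarrow> real"
    and S :: "nat \<Rightarrow> 'a \<Rightarrow> real"
    and gamma :: "nat \<Rightarrow> real" and k p :: "nat \<Rightarrow> nat"
  assumes M: "prob_space M"
    and X_indep: "prob_space.indep_vars M (\<lambda>_. borel) X UNIV"
    and X_ident: "\<And>i. distr M borel (X i) = distr M borel (X 0)"
    and X_sq_int: "integrable M (\<lambda>\<omega>. (X 0 \<omega>)\<^sup>2)"
    and X_mean: "prob_space.expectation M (X 0) = 0"
    and X_var: "prob_space.variance M (X 0) = 1"
    and S_def: "\<And>n \<omega>. S n \<omega> = (\<Sum>i<n. X i \<omega>)"
    and Mn: "\<And>n. prob_space (Mn n)"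
    and Y_indep: "\<And>n. prob_space.indep_vars (Mn n) (\<lambda>_. borel) (Y n) UNIV"
    and Y_distr: "\<And>n i. distr (Mn n) borel (Y n i) = distr M borel (S n)"
    and gamma_lim: "filterlim gamma at_top sequentially"
    and moderate: "\<forall>\<epsilon>>0. \<forall>\<^sub>F n in sequentially. \<forall>x. 0 \<le> x \<and> x < gamma n \<longrightarrow>
          \<bar>prob_space.prob M {\<omega> \<in> space M. S n \<omega> / sqrt (real n) > x} / Phi_bar x - 1\<bar> \<le> \<epsilon>"
    and k_lim: "filterlim k at_top sequentially"
    and p_lim: "filterlim p at_top sequentially"
    and pk_lim: "filterlim (\<lambda>n. real (p n) / real (k n)) at_top sequentially"
    and pk_bound: "\<And>n. real (p n) / real (k n) < exp ((gamma n)\<^sup>2 / 2)"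
  shows "\<forall>x::real.
      ((\<lambda>n. prob_space.expectation (Mn n) (N_tail n (k n) (p n) (Y n) x)) \<longlongrightarrow> exp (- x)) sequentially
    \<and> ((\<lambda>n. prob_space.variance (Mn n) (N_tail n (k n) (p n) (Y n) x)) \<longlongrightarrow> 0) sequentially
    \<and> (\<forall>\<epsilon>>0. ((\<lambda>n. prob_space.prob (Mn n)
           {\<omega> \<in> space (Mn n). \<bar>N_tail n (k n) (p n) (Y n) x \<omega> - exp (- x)\<bar> > \<epsilon>}) \<longlongrightarrow> 0) sequentially)"
proof (intro allI)
  fix x :: real
  interpret M: prob_space M by (rule M)
  define mR where "mR n = real (p n div k n)" for n
  define u where "u n = dR (mR n) + x / dR (mR n)" for n
  define q where "q n = measure M {\<omega> \<in> space M. u n < S n \<omega> / sqrt (real n)}" for n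
  define pk where "pk n = real (p n) / real (k n)" for n
  have Xm: "X i \<in> borel_measurable M" for i
    using X_indep unfolding M.indep_vars_def by auto
  have Sm: "S n \<in> borel_measurable M" for n
  proof -
    have "S n = (\<lambda>\<omega>. \<Sum>i<n. X i \<omega>)" using S_def by (simp add: fun_eq_iff)
    then show ?thesis by (simp add: borel_measurable_sum Xm)
  qed
  have kpos: "eventually (\<lambda>n. k n > 0) sequentially"
  proof -
    have "eventually (\<lambda>n. 1 \<le> k n) sequentially" using k_lim unfolding filterlim_at_top by blast
    then show ?thesis by eventually_elim simp
  qed
  have mR_lim: "filterlim mR at_top sequentially"
  proof (rule filterlim_at_top_mono)
    show "filterlim (\<lambda>n. -1 + pk n) at_top sequentially"
      unfolding pk_def by (rule filterlim_tendsto_add_at_top[OF tendsto_const pk_lim])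
    show "eventually (\<lambda>n. -1 + pk n \<le> mR n) sequentially"
      using kpos by eventually_elim (use div_bounds in \<open>auto simp: mR_def pk_def\<close>)
  qed
  have evP: "eventually (\<lambda>n. 1 < mR n \<and> 0 < dR (mR n) \<and> 2 \<le> u n \<and> u n < sqrt (2 * ln (mR n))) sequentially"
    using filterlim_iff[THEN iffD1, OF mR_lim, rule_format, OF ev_props[of x]] unfolding u_def .
  have keyS: "((\<lambda>n. mR n * Phi_bar (u n)) \<longlongrightarrow> exp (- x)) sequentially"
    unfolding u_def by (rule filterlim_compose[OF key_lim mR_lim])
  have R_lim: "((\<lambda>n. pk n / mR n) \<longlongrightarrow> 1) sequentially"
  proof (rule tendsto_sandwich[OF _ _ tendsto_const])
    have up: "((\<lambda>n. 1 + inverse (mR n)) \<longlongrightarrow> 1 + 0) sequentially"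
      by (intro tendsto_intros tendsto_inverse_0_at_top[OF mR_lim])
    then show "((\<lambda>n. 1 + inverse (mR n)) \<longlongrightarrow> 1) sequentially" by simp
    show "eventually (\<lambda>n. 1 \<le> pk n / mR n) sequentially"
      using kpos evP
    proof eventually_elim
      case (elim n)
      have "mR n \<le> pk n" using div_bounds(2)[OF elim(1)] unfolding mR_def pk_def .
      then show ?case using elim by simp
    qed
    show "eventually (\<lambda>n. pk n / mR n \<le> 1 + inverse (mR n)) sequentially"
      using kpos evP
    proof eventually_elim
      case (elim n)
      have "pk n \<le> mR n + 1" using div_bounds(1)[OF elim(1), of "p n"] unfolding mR_def pk_def by linarith
      then show ?case using elim by (simp add: field_simps)
    qed
  qed
  have gpos: "eventually (\<lambda>n. 0 \<le> gamma n) sequentially"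
    using gamma_lim unfolding filterlim_at_top by blast
  have gam: "eventually (\<lambda>n. u n < gamma n) sequentially"
    using evP kpos gpos
  proof eventually_elim
    case (elim n)
    have "mR n \<le> pk n" using div_bounds(2)[OF elim(2)] unfolding mR_def pk_def .
    also have "\<dots> < exp ((gamma n)\<^sup>2 / 2)" unfolding pk_def by (rule pk_bound)
    finally have "ln (mR n) < (gamma n)\<^sup>2 / 2"
      using elim(1) by (metis exp_gt_zero less_trans ln_exp ln_less_cancel_iff zero_less_one)
    then have "2 * ln (mR n) < (gamma n)\<^sup>2" by simp
    then have "sqrt (2 * ln (mR n)) < sqrt ((gamma n)\<^sup>2)" by (rule real_sqrt_less_mono)
    then have "sqrt (2 * ln (mR n)) < gamma n" using elim(3) by simp
    then show ?case using elim(1) by linarith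
  qed
  have phipos: "eventually (\<lambda>n. Phi_bar (u n) > 0) sequentially"
    using evP by eventually_elim (auto intro: Phi_bar_pos)
  have qlim: "((\<lambda>n. q n / Phi_bar (u n)) \<longlongrightarrow> 1) sequentially"
    unfolding tendsto_iff dist_real_def
  proof (intro allI impI)
    fix e :: real assume e: "e > 0"
    have "eventually (\<lambda>n. \<forall>y. 0 \<le> y \<and> y < gamma n \<longrightarrow>
          \<bar>prob_space.prob M {\<omega> \<in> space M. S n \<omega> / sqrt (real n) > y} / Phi_bar y - 1\<bar> \<le> e / 2) sequentially"
      using moderate e half_gt_zero by blast
    then show "eventually (\<lambda>n. \<bar>q n / Phi_bar (u n) - 1\<bar> < e) sequentially"
      using gam evP
    proof eventually_elim
      case (elim n)
      have "\<bar>q n / Phi_bar (u n) - 1\<bar> \<le> e / 2"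
        using elim(1)[rule_format, of "u n"] elim(2,3) unfolding q_def by simp
      then show ?case using e by simp
    qed
  qed
  have PN: "eventually (\<lambda>n. prob_space.expectation (Mn n) (N_tail n (k n) (p n) (Y n) x) = real (p n) * q n / real (k n)
      \<and> prob_space.variance (Mn n) (N_tail n (k n) (p n) (Y n) x) = real (p n) * q n * (1 - q n) / (real (k n))\<^sup>2
      \<and> N_tail n (k n) (p n) (Y n) x \<in> borel_measurable (Mn n)
      \<and> integrable (Mn n) (\<lambda>\<omega>. (N_tail n (k n) (p n) (Y n) x \<omega>)\<^sup>2)) sequentially"
    using kpos evP
  proof eventually_elim
    case (elim n)
    have dpos: "d_const (p n div k n) > 0" using elim by (simp add: d_const_dR mR_def)
    have ue: "d_const (p n div k n) + x / d_const (p n div k n) = u n"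
      by (simp add: d_const_dR mR_def u_def)
    note P = per_n[OF Mn[of n] Y_indep[of n] Y_distr[of n] Sm elim(1) dpos, where x = x and n = n]
    show ?case using P unfolding ue q_def[symmetric] by simp
  qed
  have E'lim: "((\<lambda>n. real (p n) * q n / real (k n)) \<longlongrightarrow> exp (- x)) sequentially"
  proof -
    have "((\<lambda>n. (pk n / mR n) * (mR n * Phi_bar (u n)) * (q n / Phi_bar (u n))) \<longlongrightarrow> 1 * exp (- x) * 1) sequentially"
      by (intro tendsto_mult R_lim keyS qlim)
    moreover have "eventually (\<lambda>n. (pk n / mR n) * (mR n * Phi_bar (u n)) * (q n / Phi_bar (u n))
        = real (p n) * q n / real (k n)) sequentially"
      using evP phipos
    proof eventually_elim
      case (elim n)
      then show ?case by (simp add: pk_def field_simps)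
    qed
    ultimately show ?thesis by (simp add: tendsto_cong)
  qed
  have Elim: "((\<lambda>n. prob_space.expectation (Mn n) (N_tail n (k n) (p n) (Y n) x)) \<longlongrightarrow> exp (- x)) sequentially"
  proof -
    have "eventually (\<lambda>n. real (p n) * q n / real (k n) = prob_space.expectation (Mn n) (N_tail n (k n) (p n) (Y n) x)) sequentially"
      using PN by eventually_elim (drule conjunct1, erule sym)
    with E'lim show ?thesis by (simp add: tendsto_cong)
  qed
  have q01: "0 \<le> q n \<and> q n \<le> 1" for n unfolding q_def by simp
  have kinv: "((\<lambda>n. inverse (real (k n))) \<longlongrightarrow> 0) sequentially"
    by (rule tendsto_inverse_0_at_top[OF filterlim_compose[OF filterlim_real_sequentially k_lim]])
  have V'lim: "((\<lambda>n. real (p n) * q n * (1 - q n) / (real (k n))\<^sup>2) \<longlongrightarrow> 0) sequentially"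
  proof -
    have z: "((\<lambda>n. (1 - q n) / real (k n)) \<longlongrightarrow> 0) sequentially"
    proof (rule tendsto_sandwich[OF _ _ tendsto_const kinv])
      show "eventually (\<lambda>n. 0 \<le> (1 - q n) / real (k n)) sequentially"
        using q01 by (intro always_eventually allI) simp
      show "eventually (\<lambda>n. (1 - q n) / real (k n) \<le> inverse (real (k n))) sequentially"
        using kpos
      proof eventually_elim
        case (elim n)
        then show ?case using q01[of n] by (simp add: field_simps)
      qed
    qed
    have "((\<lambda>n. (real (p n) * q n / real (k n)) * ((1 - q n) / real (k n))) \<longlongrightarrow> exp (- x) * 0) sequentially"
      by (intro tendsto_mult E'lim z)
    then show ?thesis by (simp add: power2_eq_square)
  qed
  have Vlim: "((\<lambda>n. prob_space.variance (Mn n) (N_tail n (k n) (p n) (Y n) x)) \<longlongrightarrow> 0) sequentially"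
  proof -
    have "eventually (\<lambda>n. real (p n) * q n * (1 - q n) / (real (k n))\<^sup>2 = prob_space.variance (Mn n) (N_tail n (k n) (p n) (Y n) x)) sequentially"
      using PN by eventually_elim (drule conjunct2, drule conjunct1, erule sym)
    with V'lim show ?thesis by (simp add: tendsto_cong)
  qed
  have Plim: "((\<lambda>n. prob_space.prob (Mn n)
           {\<omega> \<in> space (Mn n). \<bar>N_tail n (k n) (p n) (Y n) x \<omega> - exp (- x)\<bar> > \<epsilon>}) \<longlongrightarrow> 0) sequentially"
    if e: "\<epsilon> > 0" for \<epsilon>
  proof (rule tendsto_sandwich[OF _ _ tendsto_const])
    have e2: "\<epsilon> / 2 > 0" using e by simp
    show "((\<lambda>n. prob_space.variance (Mn n) (N_tail n (k n) (p n) (Y n) x) / (\<epsilon> / 2)\<^sup>2) \<longlongrightarrow> 0) sequentially"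
      using tendsto_divide[OF Vlim tendsto_const[of "(\<epsilon> / 2)\<^sup>2"]] e by simp
    show "eventually (\<lambda>n. 0 \<le> prob_space.prob (Mn n)
           {\<omega> \<in> space (Mn n). \<bar>N_tail n (k n) (p n) (Y n) x \<omega> - exp (- x)\<bar> > \<epsilon>}) sequentially"
      by (intro always_eventually allI measure_nonneg)
    have evE: "eventually (\<lambda>n. \<bar>prob_space.expectation (Mn n) (N_tail n (k n) (p n) (Y n) x) - exp (- x)\<bar> < \<epsilon> / 2) sequentially"
      using Elim e2 unfolding tendsto_iff dist_real_def by blast
    show "eventually (\<lambda>n. prob_space.prob (Mn n)
           {\<omega> \<in> space (Mn n). \<bar>N_tail n (k n) (p n) (Y n) x \<omega> - exp (- x)\<bar> > \<epsilon>}
         \<le> prob_space.variance (Mn n) (N_tail n (k n) (p n) (Y n) x) / (\<epsilon> / 2)\<^sup>2) sequentially"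
      using PN evE
    proof eventually_elim
      case (elim n)
      interpret P: prob_space "Mn n" by (rule Mn)
      define f where "f = N_tail n (k n) (p n) (Y n) x"
      have fm[measurable]: "f \<in> borel_measurable (Mn n)" using elim unfolding f_def by simp
      have fi: "integrable (Mn n) (\<lambda>\<omega>. (f \<omega>)\<^sup>2)" using elim unfolding f_def by simp
      have fi': "integrable (Mn n) (\<lambda>\<omega>. f \<omega> ^ 2)" using fi by simp
      have E: "\<bar>P.expectation f - exp (- x)\<bar> < \<epsilon> / 2" using elim unfolding f_def by simp
      have sub: "{\<omega> \<in> space (Mn n). \<bar>f \<omega> - exp (- x)\<bar> > \<epsilon>} \<subseteq> {\<omega> \<in> space (Mn n). \<epsilon> / 2 \<le> \<bar>f \<omega> - P.expectation f\<bar>}"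
      proof (rule subsetI)
        fix w assume "w \<in> {\<omega> \<in> space (Mn n). \<bar>f \<omega> - exp (- x)\<bar> > \<epsilon>}"
        then have w: "w \<in> space (Mn n)" "\<epsilon> < \<bar>f w - exp (- x)\<bar>" by auto
        have "\<bar>f w - exp (- x)\<bar> \<le> \<bar>f w - P.expectation f\<bar> + \<bar>P.expectation f - exp (- x)\<bar>"
          using abs_triangle_ineq[of "f w - P.expectation f" "P.expectation f - exp (- x)"] by simp
        then have "\<epsilon> / 2 \<le> \<bar>f w - P.expectation f\<bar>" using w(2) E by linarith
        then show "w \<in> {\<omega> \<in> space (Mn n). \<epsilon> / 2 \<le> \<bar>f \<omega> - P.expectation f\<bar>}" using w(1) by simp
      qed
      have "{\<omega> \<in> space (Mn n). \<epsilon> / 2 \<le> \<bar>f \<omega> - P.expectation f\<bar>} \<in> sets (Mn n)" by measurable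
      then have "P.prob {\<omega> \<in> space (Mn n). \<bar>f \<omega> - exp (- x)\<bar> > \<epsilon>} \<le> P.prob {\<omega> \<in> space (Mn n). \<epsilon> / 2 \<le> \<bar>f \<omega> - P.expectation f\<bar>}"
        using sub by (rule P.finite_measure_mono[rotated])
      also have "\<dots> \<le> P.variance f / (\<epsilon> / 2)\<^sup>2"
        using P.Chebyshev_inequality[OF fm fi' e2] by simp
      finally show ?case unfolding f_def .
    qed
  qed
  show "((\<lambda>n. prob_space.expectation (Mn n) (N_tail n (k n) (p n) (Y n) x)) \<longlongrightarrow> exp (- x)) sequentially
    \<and> ((\<lambda>n. prob_space.variance (Mn n) (N_tail n (k n) (p n) (Y n) x)) \<longlongrightarrow> 0) sequentially
    \<and> (\<forall>\<epsilon>>0. ((\<lambda>n. prob_space.prob (Mn n)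
           {\<omega> \<in> space (Mn n). \<bar>N_tail n (k n) (p n) (Y n) x \<omega> - exp (- x)\<bar> > \<epsilon>}) \<longlongrightarrow> 0) sequentially)"
    using Elim Vlim Plim by blast
qed


end
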